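(* Consider the Robust protocol with parameters $k,\varepsilon,c$ (described in the context) run on any event stream chosen by a white-box adaptive adversary. Let $R_N$ be the number of rounds the protocol performs to process the first $N$ events. Then \[ \mathbb E[R_N]=\Theta\!\left(\frac{\log N}{\log\!\left(1+\frac{\sqrt k\,\varepsilon}{c}\right)}\right). \] Moreover, for any $\delta\in(0,1)$, with probability at least $1-\delta$, \[ R_N=O\!\left(\frac{\log N}{\log\!\left(1+\frac{\sqrt k\,\varepsilon}{c}\right)}+\log\frac1\delta\right), \] where the implicit constant is absolute and independent of $\delta,\varepsilon,k,N$.
   Context: Distributed counting: a server and $k$ sites; events arrive one at a time, each at some site; $n_i$ is the number of events at site $i$ so far. Robust protocol with parameters $k$, $\varepsilon>0$, $c\ge1$: each site $i$ keeps a transmission probability $p$ (initially $1$, updated by server broadcasts) and its count $n_i$. On each event at site $i$: $n_i\gets n_i+1$, and independently with probability $p$ the site sends ReportSample to the server. On receiving CountRequest, site $i$ sends its current $n_i$. The server keeps a counter $B=0$, values $\bar n_i=0$, and $p=1$; its estimate is $\hat n=\bar n+B/p$ with $\bar n=\sum_i\bar n_i$. On receiving ReportSample the server sets $B\gets B+1$; if now $B=k$, the round ends and a new round begins: the server broadcasts CountRequest, sets each $\bar n_i$ to the reported exact $n_i$, sets $p\gets\min\{1,c\sqrt k/(\varepsilon\bar n)\}$, broadcasts $p$, and sets $B\gets0$. A white-box adaptive adversary chooses the site of each next event as an arbitrary function of the full history of states, realized randomness and messages. *)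

theory Defs
  imports "HOL-Probability.Probability"
begin

text \<open>Sites are indexed 0..k-1. All sites hold the same transmission probability
  as the server (it is broadcast), so a single field p is kept.
  rounds counts the rounds that have ended (i.e. how often B reached k).\<close>

record rstate =
  cnt    :: "nat \<Rightarrow> nat"
  nbar   :: "nat \<Rightarrow> nat"
  bcnt   :: nat
  prob   :: real
  rounds :: nat

definition rinit :: rstate where
  "rinit = \<lparr>cnt = (\<lambda>_. 0), nbar = (\<lambda>_. 0), bcnt = 0, prob = 1, rounds = 0\<rparr>"

text \<open>One event at site i; b is the outcome of the site's coin with
  probability p (True = ReportSample sent).\<close>
definition rstep :: "nat \<Rightarrow> real \<Rightarrow> real \<Rightarrow> rstate \<Rightarrow> nat \<Rightarrow> bool \<Rightarrow> rstate" where
  "rstep k \<epsilon> c s i b =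
     (let n' = (cnt s)(i := cnt s i + 1) in
      if \<not> b then s\<lparr>cnt := n'\<rparr>
      else if bcnt s + 1 = k then
        (let nb = (\<Sum>j<k. n' j) in
         s\<lparr>cnt := n', nbar := n', bcnt := 0,
           prob := min 1 (c * sqrt (real k) / (\<epsilon> * real nb)),
           rounds := rounds s + 1\<rparr>)
      else s\<lparr>cnt := n', bcnt := bcnt s + 1\<rparr>)"

text \<open>The adversary sees the
  whole history: the list of all states so far (initial state first, current
  state last) and all realised coin flips; it returns the site of the next
  event.\<close>
primrec rrun :: "nat \<Rightarrow> real \<Rightarrow> real \<Rightarrow> (rstate list \<Rightarrow> bool list \<Rightarrow> nat) \<Rightarrow> nat
                 \<Rightarrow> (rstate list \<times> bool list) pmf" where
  "rrun k \<epsilon> c adv 0 = return_pmf ([rinit], [])"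
| "rrun k \<epsilon> c adv (Suc m) =
     bind_pmf (rrun k \<epsilon> c adv m)
       (\<lambda>(ss, bs). let s = last ss; i = adv ss bs in
          map_pmf (\<lambda>b. (ss @ [rstep k \<epsilon> c s i b], bs @ [b])) (bernoulli_pmf (prob s)))"

definition RN :: "rstate list \<times> bool list \<Rightarrow> nat" where
  "RN h = rounds (last (fst h))"

definition valid_adv :: "nat \<Rightarrow> (rstate list \<Rightarrow> bool list \<Rightarrow> nat) \<Rightarrow> bool" where
  "valid_adv k adv \<longleftrightarrow> (\<forall>ss bs. adv ss bs < k)"

definition Lscale :: "nat \<Rightarrow> real \<Rightarrow> real \<Rightarrow> nat \<Rightarrow> real" where
  "Lscale k \<epsilon> c N = ln (real N) / ln (1 + sqrt (real k) * \<epsilon> / c)"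

end

theory Submission
  imports Defs
begin

definition ntot :: "nat \<Rightarrow> rstate \<Rightarrow> nat" where
  "ntot k s = (\<Sum>j<k. cnt s j)"

definition rinv :: "nat \<Rightarrow> real \<Rightarrow> real \<Rightarrow> rstate \<Rightarrow> bool" where
  "rinv k \<epsilon> c s \<longleftrightarrow> bcnt s < k \<and> 0 < prob s \<and> prob s \<le> 1 \<and>
     k * rounds s + bcnt s \<le> ntot k s \<and>
     (prob s = 1 \<or> (\<exists>nb::nat. 0 < nb \<and> nb \<le> ntot k s \<and> prob s = c * sqrt (real k) / (\<epsilon> * real nb)))"

lemma sum_upd_plus1:
  fixes f :: "nat \<Rightarrow> nat"
  assumes "i < k"
  shows "(\<Sum>j<k. (f(i := f i + 1)) j) = (\<Sum>j<k. f j) + 1"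
proof -
  have "(\<Sum>j<k. (f(i := f i + 1)) j) = (\<Sum>j<k. f j + (if j = i then 1 else 0))"
    by (intro sum.cong) auto
  also have "\<dots> = (\<Sum>j<k. f j) + 1"
    using assms by (simp add: sum.distrib)
  finally show ?thesis .
qed

lemma sum_upd_plus1':
  fixes f :: "nat \<Rightarrow> nat"
  assumes "i < k"
  shows "(\<Sum>j<k. if j = i then Suc (f i) else f j) = Suc (\<Sum>j<k. f j)"
  using sum_upd_plus1[OF assms, of f] by (simp add: fun_upd_def)

lemma ntot_step:
  assumes "i < k"
  shows "ntot k (rstep k \<epsilon> c s i b) = ntot k s + 1"
  using assms unfolding rstep_def Let_def ntot_def
  by (auto simp: sum_upd_plus1')

lemma rinv_init: "k \<ge> 1 \<Longrightarrow> rinv k \<epsilon> c rinit"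
  by (simp add: rinv_def rinit_def ntot_def)

lemma rinv_step:
  assumes inv: "rinv k \<epsilon> c s" and i: "i < k" and eps: "\<epsilon> > 0" and c: "c \<ge> 1"
  shows "rinv k \<epsilon> c (rstep k \<epsilon> c s i b)"
proof -
  have nt: "ntot k (rstep k \<epsilon> c s i b) = ntot k s + 1" using ntot_step[OF i] .
  show ?thesis
  proof (cases b)
    case False
    then show ?thesis using inv nt unfolding rinv_def
      by (auto simp: rstep_def Let_def)
  next
    case True
    note b = True
    show ?thesis
    proof (cases "bcnt s + 1 = k")
      case False
      then show ?thesis using inv nt b unfolding rinv_def
        by (auto simp: rstep_def Let_def)
    next
      case True
      define nb where "nb = ntot k s + 1"
      have nbdef: "(\<Sum>j<k. ((cnt s)(i := cnt s i + 1)) j) = nb"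
        using i by (simp add: nb_def ntot_def sum_upd_plus1')
      have st: "rstep k \<epsilon> c s i b = s\<lparr>cnt := (cnt s)(i := cnt s i + 1), nbar := (cnt s)(i := cnt s i + 1), bcnt := 0,
           prob := min 1 (c * sqrt (real k) / (\<epsilon> * real nb)), rounds := rounds s + 1\<rparr>"
        unfolding rstep_def Let_def nbdef using b True by simp
      have pos: "c * sqrt (real k) / (\<epsilon> * real nb) > 0"
        using eps c i by (simp add: nb_def)
      have "k * (rounds s + 1) \<le> nb" using inv True unfolding rinv_def nb_def by auto
      moreover have "ntot k (rstep k \<epsilon> c s i b) = nb" using nt nb_def by simp
      moreover have "min 1 (c * sqrt (real k) / (\<epsilon> * real nb)) = 1 \<or>
          (\<exists>nb'::nat. 0 < nb' \<and> nb' \<le> nb \<and> min 1 (c * sqrt (real k) / (\<epsilon> * real nb)) = c * sqrt (real k) / (\<epsilon> * real nb'))"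
        by (cases "c * sqrt (real k) / (\<epsilon> * real nb) \<le> 1") (auto simp: nb_def)
      ultimately show ?thesis using pos i unfolding rinv_def by (simp add: st)
    qed
  qed
qed

lemma rrun_finite: "finite (set_pmf (rrun k \<epsilon> c adv m))"
proof (induction m)
  case 0
  then show ?case by simp
next
  case (Suc m)
  have fin: "finite (set_pmf (bernoulli_pmf p))" for p
    by (rule finite_subset[of _ UNIV]) auto
  show ?case using Suc fin
    by (auto simp: Let_def split: prod.splits)
qed

lemma rrun_support:
  assumes adv: "valid_adv k adv" and k: "k \<ge> 1" and eps: "\<epsilon> > 0" and c: "c \<ge> 1"
  shows "h \<in> set_pmf (rrun k \<epsilon> c adv m) \<Longrightarrow>
     fst h \<noteq> [] \<and> rinv k \<epsilon> c (last (fst h)) \<and> ntot k (last (fst h)) = m"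
proof (induction m arbitrary: h)
  case 0
  then show ?case using rinv_init[OF k] by (simp add: ntot_def rinit_def)
next
  case (Suc m)
  from Suc.prems obtain ss bs b where h0: "(ss, bs) \<in> set_pmf (rrun k \<epsilon> c adv m)"
    and h: "h = (ss @ [rstep k \<epsilon> c (last ss) (adv ss bs) b], bs @ [b])"
    by (auto simp: Let_def split: prod.splits)
  have i: "adv ss bs < k" using adv by (simp add: valid_adv_def)
  from Suc.IH[OF h0] have "rinv k \<epsilon> c (last ss)" "ntot k (last ss) = m" by auto
  then show ?case using h rinv_step[OF _ i eps c] ntot_step[OF i] by simp
qed

lemma rrun_exp_step:
  fixes f :: "rstate \<Rightarrow> real"
  assumes pr: "\<And>h. h \<in> set_pmf (rrun k \<epsilon> c adv m) \<Longrightarrow> 0 \<le> prob (last (fst h)) \<and> prob (last (fst h)) \<le> 1"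
  shows "measure_pmf.expectation (rrun k \<epsilon> c adv (Suc m)) (\<lambda>h. f (last (fst h))) =
    measure_pmf.expectation (rrun k \<epsilon> c adv m)
      (\<lambda>h. prob (last (fst h)) * f (rstep k \<epsilon> c (last (fst h)) (adv (fst h) (snd h)) True)
         + (1 - prob (last (fst h))) * f (rstep k \<epsilon> c (last (fst h)) (adv (fst h) (snd h)) False))"
    (is "?L = measure_pmf.expectation _ ?g")
proof -
  let ?M = "rrun k \<epsilon> c adv m"
  let ?G = "(\<lambda>(ss, bs). let s = last ss; i = adv ss bs in
          map_pmf (\<lambda>b. (ss @ [rstep k \<epsilon> c s i b], bs @ [b])) (bernoulli_pmf (prob s)))"
  have finb: "finite (set_pmf (bernoulli_pmf p))" for p
    by (rule finite_subset[of _ UNIV]) auto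
  have "?L = measure_pmf.expectation (bind_pmf ?M ?G) (\<lambda>h. f (last (fst h)))" by simp
  also have "\<dots> = (\<Sum>a\<in>set_pmf ?M. pmf ?M a *\<^sub>R measure_pmf.expectation (?G a) (\<lambda>h. f (last (fst h))))"
    by (rule pmf_expectation_bind) (auto simp: rrun_finite Let_def finb split: prod.splits)
  also have "\<dots> = (\<Sum>a\<in>set_pmf ?M. pmf ?M a *\<^sub>R ?g a)"
  proof (intro sum.cong refl)
    fix a assume a: "a \<in> set_pmf ?M"
    obtain ss bs where ab: "a = (ss, bs)" by (cases a)
    have p01: "0 \<le> prob (last ss)" "prob (last ss) \<le> 1" using pr[OF a] ab by auto
    show "pmf ?M a *\<^sub>R measure_pmf.expectation (?G a) (\<lambda>h. f (last (fst h))) = pmf ?M a *\<^sub>R ?g a"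
      using p01 by (simp add: ab Let_def algebra_simps)
  qed
  also have "\<dots> = measure_pmf.expectation ?M ?g"
    by (rule integral_measure_pmf[symmetric]) (auto simp: rrun_finite)
  finally show ?thesis .
qed

lemma rrun_supermart:
  fixes f :: "rstate \<Rightarrow> real"
  assumes adv: "valid_adv k adv" and k: "k \<ge> 1" and eps: "\<epsilon> > 0" and c: "c \<ge> 1"
  assumes step: "\<And>s i. rinv k \<epsilon> c s \<Longrightarrow> i < k \<Longrightarrow>
     prob s * f (rstep k \<epsilon> c s i True) + (1 - prob s) * f (rstep k \<epsilon> c s i False) \<le> f s"
  shows "measure_pmf.expectation (rrun k \<epsilon> c adv m) (\<lambda>h. f (last (fst h))) \<le> f rinit"
proof (induction m)
  case 0
  then show ?case by simp
next
  case (Suc m)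
  note sup = rrun_support[OF adv k eps c]
  have pr: "\<And>h. h \<in> set_pmf (rrun k \<epsilon> c adv m) \<Longrightarrow> 0 \<le> prob (last (fst h)) \<and> prob (last (fst h)) \<le> 1"
    using sup unfolding rinv_def by fastforce
  have "measure_pmf.expectation (rrun k \<epsilon> c adv (Suc m)) (\<lambda>h. f (last (fst h))) =
    measure_pmf.expectation (rrun k \<epsilon> c adv m)
      (\<lambda>h. prob (last (fst h)) * f (rstep k \<epsilon> c (last (fst h)) (adv (fst h) (snd h)) True)
         + (1 - prob (last (fst h))) * f (rstep k \<epsilon> c (last (fst h)) (adv (fst h) (snd h)) False))"
    by (rule rrun_exp_step[OF pr])
  also have "\<dots> \<le> measure_pmf.expectation (rrun k \<epsilon> c adv m) (\<lambda>h. f (last (fst h)))"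
  proof (rule integral_mono_AE)
    show "AE x in measure_pmf (rrun k \<epsilon> c adv m).
      prob (last (fst x)) * f (rstep k \<epsilon> c (last (fst x)) (adv (fst x) (snd x)) True) +
      (1 - prob (last (fst x))) * f (rstep k \<epsilon> c (last (fst x)) (adv (fst x) (snd x)) False)
      \<le> f (last (fst x))"
    proof (rule AE_pmfI)
      fix h assume "h \<in> set_pmf (rrun k \<epsilon> c adv m)"
      then have "rinv k \<epsilon> c (last (fst h))" using sup by auto
      moreover have "adv (fst h) (snd h) < k" using adv by (simp add: valid_adv_def)
      ultimately show "prob (last (fst h)) * f (rstep k \<epsilon> c (last (fst h)) (adv (fst h) (snd h)) True) +
      (1 - prob (last (fst h))) * f (rstep k \<epsilon> c (last (fst h)) (adv (fst h) (snd h)) False)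
      \<le> f (last (fst h))" by (rule step)
    qed
  qed (auto intro!: integrable_measure_pmf_finite simp: rrun_finite)
  finally show ?case using Suc by simp
qed

lemma rstep_F [simp]:
  "bcnt (rstep k \<epsilon> c s i False) = bcnt s" "rounds (rstep k \<epsilon> c s i False) = rounds s"
  "prob (rstep k \<epsilon> c s i False) = prob s"
  by (simp_all add: rstep_def Let_def)

lemma rstep_T_mid:
  assumes "bcnt s + 1 \<noteq> k"
  shows "bcnt (rstep k \<epsilon> c s i True) = bcnt s + 1" "rounds (rstep k \<epsilon> c s i True) = rounds s"
  "prob (rstep k \<epsilon> c s i True) = prob s"
  using assms by (simp_all add: rstep_def Let_def)

lemma rstep_T_end:
  assumes "bcnt s + 1 = k" "i < k"
  shows "bcnt (rstep k \<epsilon> c s i True) = 0" "rounds (rstep k \<epsilon> c s i True) = rounds s + 1"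
  "prob (rstep k \<epsilon> c s i True) = min 1 (c * sqrt (real k) / (\<epsilon> * (real (ntot k s) + 1)))"
proof -
  have "real (\<Sum>j<k. ((cnt s)(i := cnt s i + 1)) j) = real (ntot k s) + 1"
    using sum_upd_plus1[OF assms(2), of "cnt s"] by (simp add: ntot_def)
  then show "bcnt (rstep k \<epsilon> c s i True) = 0" "rounds (rstep k \<epsilon> c s i True) = rounds s + 1"
  "prob (rstep k \<epsilon> c s i True) = min 1 (c * sqrt (real k) / (\<epsilon> * (real (ntot k s) + 1)))"
    using assms unfolding rstep_def Let_def by (simp_all del: of_nat_sum)
qed

lemma ln_concave2:
  fixes p x1 x2 :: real
  assumes "0 < p" "p \<le> 1" "x1 > 0" "x2 > 0"
  shows "p * ln x1 + (1 - p) * ln x2 \<le> ln (p * x1 + (1 - p) * x2)"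
proof -
  define m where "m = p * x1 + (1 - p) * x2"
  have m: "m > 0" unfolding m_def using assms
    by (smt (verit) mult_pos_pos mult_nonneg_nonneg)
  have l: "ln x \<le> ln m + x / m - 1" if "x > 0" for x
  proof -
    have "ln (x / m) \<le> x / m - 1" using that m by (intro ln_le_minus_one) auto
    then show ?thesis using that m by (simp add: ln_div)
  qed
  have "p * ln x1 + (1 - p) * ln x2 \<le> p * (ln m + x1 / m - 1) + (1 - p) * (ln m + x2 / m - 1)"
    using assms l[of x1] l[of x2] by (intro add_mono mult_left_mono) auto
  also have "\<dots> = ln m + (p * x1 + (1 - p) * x2) / m - 1" using m by (simp add: field_simps)
  also have "\<dots> = ln m" using m by (simp add: m_def)
  finally show ?thesis by (simp add: m_def)
qed

lemma lb_real:
  fixes p n j :: real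
  assumes "0 < p" "p \<le> 1" "n \<ge> 0" "j \<ge> 1"
  shows "p * ln (n + 1 + (j - 1) / p) + (1 - p) * ln (n + 1 + j / p) \<le> ln (n + j / p)"
proof -
  have "p * ln (n + 1 + (j - 1) / p) + (1 - p) * ln (n + 1 + j / p)
     \<le> ln (p * (n + 1 + (j - 1) / p) + (1 - p) * (n + 1 + j / p))"
  proof (rule ln_concave2)
    have "(j - 1) / p \<ge> 0" "j / p \<ge> 0" using assms by auto
    then show "n + 1 + (j - 1) / p > 0" "n + 1 + j / p > 0" using assms by linarith+
  qed (use assms in auto)
  also have "p * (n + 1 + (j - 1) / p) + (1 - p) * (n + 1 + j / p) = n + j / p"
    using assms by (simp add: field_simps)
  finally show ?thesis .
qed

lemma roundend_real:
  fixes n' a R kk p' :: real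
  assumes a: "a > 0" and kk: "kk \<ge> 1" and R: "R \<ge> 0" and n': "n' \<ge> kk * (R + 1)"
    and p': "p' = min 1 (kk / (a * n'))"
  shows "ln (n' + kk / p') \<le> ln n' + ln (1 + a) + (ln (R + 2) - ln (R + 1))"
proof -
  have "kk * (R + 1) \<ge> 1 * 1" using kk R by (intro mult_mono) auto
  then have n'pos: "n' \<ge> 1" using n' by linarith
  have an: "a * n' > 0" using a n'pos by simp
  have kp: "kk / p' \<le> kk + a * n'"
  proof (cases "kk / (a * n') \<le> 1")
    case True
    then have "p' = kk / (a * n')" using p' by simp
    then have "kk / p' = a * n'" using an kk by simp
    then show ?thesis using kk by simp
  next
    case False
    then have "p' = 1" using p' by simp
    then show ?thesis using an by simp
  qed
  have p'pos: "p' > 0" using p' an kk by simp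
  have e1: "(n' + kk) * (1 + a) = n' + kk + a * n' + a * kk" by (simp add: algebra_simps)
  have "a * kk \<ge> 0" using a kk by simp
  then have l1: "n' + kk / p' \<le> (n' + kk) * (1 + a)" using kp e1 by linarith
  have "(n' + kk) * (R + 1) \<le> n' * (R + 2)" using n' by (simp add: algebra_simps)
  hence l2: "(n' + kk) \<le> n' * ((R + 2) / (R + 1))" using R by (simp add: field_simps)
  have "(n' + kk) * (1 + a) \<le> n' * ((R + 2) / (R + 1)) * (1 + a)"
    using l2 a by (intro mult_right_mono) auto
  with l1 have le: "n' + kk / p' \<le> n' * (1 + a) * ((R + 2) / (R + 1))"
    by (simp add: algebra_simps)
  have pos: "n' + kk / p' > 0" using n'pos p'pos kk
    by (smt (verit) divide_nonneg_pos)
  have "ln (n' + kk / p') \<le> ln (n' * (1 + a) * ((R + 2) / (R + 1)))"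
    using le pos by simp
  also have "\<dots> = ln n' + ln (1 + a) + (ln (R + 2) - ln (R + 1))"
    using n'pos a R by (simp add: ln_mult ln_div)
  finally show ?thesis .
qed

definition aa :: "nat \<Rightarrow> real \<Rightarrow> real \<Rightarrow> real" where
  "aa k \<epsilon> c = sqrt (real k) * \<epsilon> / c"

lemma aa_pos: "k \<ge> 1 \<Longrightarrow> \<epsilon> > 0 \<Longrightarrow> c \<ge> 1 \<Longrightarrow> aa k \<epsilon> c > 0"
  by (simp add: aa_def)

lemma aa_p:
  assumes "k \<ge> 1" "\<epsilon> > 0" "c \<ge> 1" "x > 0"
  shows "c * sqrt (real k) / (\<epsilon> * x) = real k / (aa k \<epsilon> c * x)"
proof -
  have sk: "sqrt (real k) > 0" using assms by simp
  have kk: "real k = sqrt (real k) * sqrt (real k)" by simp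
  show ?thesis unfolding aa_def using assms sk
    by (subst (2) kk) (simp add: field_simps)
qed

definition Phi :: "nat \<Rightarrow> real \<Rightarrow> real \<Rightarrow> rstate \<Rightarrow> real" where
  "Phi k \<epsilon> c s = ln (real (ntot k s) + real (k - bcnt s) / prob s)
     - ln (1 + aa k \<epsilon> c) * real (rounds s) - ln (real (rounds s) + 1)"

lemma Phi_step:
  assumes inv: "rinv k \<epsilon> c s" and i: "i < k" and k: "k \<ge> 1" and eps: "\<epsilon> > 0" and c: "c \<ge> 1"
  shows "prob s * Phi k \<epsilon> c (rstep k \<epsilon> c s i True) + (1 - prob s) * Phi k \<epsilon> c (rstep k \<epsilon> c s i False)
     \<le> Phi k \<epsilon> c s"
proof -
  define n where "n = real (ntot k s)"
  define p where "p = prob s"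
  define j where "j = real (k - bcnt s)"
  define R where "R = real (rounds s)"
  define a where "a = aa k \<epsilon> c"
  define Z where "Z = ln (1 + a) * R + ln (R + 1)"
  have B: "bcnt s < k" and p0: "0 < p" and p1: "p \<le> 1" and nR: "k * rounds s + bcnt s \<le> ntot k s"
    using inv unfolding rinv_def p_def by auto
  have j1: "j \<ge> 1" using B unfolding j_def by simp
  have n0: "n \<ge> 0" unfolding n_def by simp
  have a0: "a > 0" unfolding a_def using aa_pos k eps c by simp
  have R0: "R \<ge> 0" unfolding R_def by simp
  have nt: "real (ntot k (rstep k \<epsilon> c s i b)) = n + 1" for b
    using ntot_step[OF i] n_def by simp
  have PF: "Phi k \<epsilon> c (rstep k \<epsilon> c s i False) = ln (n + 1 + j / p) - Z"
    unfolding Phi_def Z_def using nt[of False] by (simp add: j_def p_def R_def a_def)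
  have PT: "Phi k \<epsilon> c (rstep k \<epsilon> c s i True) \<le> ln (n + 1 + (j - 1) / p) - Z"
  proof (cases "bcnt s + 1 = k")
    case False
    note e = rstep_T_mid[OF False, of \<epsilon> c i]
    have "real (k - bcnt (rstep k \<epsilon> c s i True)) = j - 1"
      using e B False unfolding j_def by simp
    then show ?thesis
      unfolding Phi_def Z_def using nt[of True] e by (simp add: p_def R_def a_def)
  next
    case True
    note e = rstep_T_end[OF True i, of \<epsilon> c]
    have jj: "j = 1" using True unfolding j_def by simp
    define p' where "p' = min 1 (real k / (a * (n + 1)))"
    have pe: "prob (rstep k \<epsilon> c s i True) = p'"
      unfolding e(3) p'_def a_def n_def using aa_p[OF k eps c, of "real (ntot k s) + 1"] by simp
    have "real k * (R + 1) \<le> n + 1"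
    proof -
      have "k * (rounds s + 1) \<le> ntot k s + 1" using nR True by simp
      then have "real (k * (rounds s + 1)) \<le> real (ntot k s + 1)" by (simp only: of_nat_le_iff)
      then show ?thesis unfolding R_def n_def by (simp add: algebra_simps)
    qed
    then have "ln (n + 1 + real k / p') \<le> ln (n + 1) + ln (1 + a) + (ln (R + 2) - ln (R + 1))"
      using roundend_real[OF a0, of "real k" R "n + 1" p'] k R0 p'_def by simp
    moreover have "Phi k \<epsilon> c (rstep k \<epsilon> c s i True) = ln (n + 1 + real k / p') - ln (1 + a) * (R + 1) - ln (R + 2)"
      unfolding Phi_def using nt[of True] e pe by (simp add: R_def a_def add.commute)
    ultimately show ?thesis unfolding Z_def jj by (simp add: algebra_simps)
  qed
  have "p * Phi k \<epsilon> c (rstep k \<epsilon> c s i True) + (1 - p) * Phi k \<epsilon> c (rstep k \<epsilon> c s i False)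
      \<le> p * (ln (n + 1 + (j - 1) / p) - Z) + (1 - p) * (ln (n + 1 + j / p) - Z)"
    using PT PF p0 p1 by (intro add_mono mult_left_mono) auto
  also have "\<dots> = (p * ln (n + 1 + (j - 1) / p) + (1 - p) * ln (n + 1 + j / p)) - Z"
    by (simp add: algebra_simps)
  also have "\<dots> \<le> ln (n + j / p) - Z"
    using lb_real[OF p0 p1 n0 j1] by simp
  also have "\<dots> = Phi k \<epsilon> c s"
    unfolding Phi_def Z_def n_def j_def p_def R_def a_def by simp
  finally show ?thesis unfolding p_def .
qed

lemma ln_le_lin:
  fixes R eta :: real
  assumes "0 < eta" "eta \<le> 1" "R \<ge> 0"
  shows "ln (R + 1) \<le> eta * R + ln (1 / eta)"
proof -
  have "ln (eta * (R + 1)) \<le> eta * (R + 1) - 1"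
    using assms by (intro ln_le_minus_one) auto
  then have "ln eta + ln (R + 1) \<le> eta * (R + 1) - 1" using assms by (simp add: ln_mult)
  then show ?thesis using assms by (simp add: ln_div algebra_simps)
qed

lemma exp_lower:
  assumes adv: "valid_adv k adv" and k: "k \<ge> 1" and eps: "\<epsilon> > 0" and c: "c \<ge> 1" and N: "N \<ge> 1"
  defines "eta \<equiv> ln (1 + aa k \<epsilon> c) / (1 + ln (1 + aa k \<epsilon> c))"
  shows "ln (real N) - ln (real k) - ln (1 / eta)
     \<le> 2 * ln (1 + aa k \<epsilon> c) * measure_pmf.expectation (rrun k \<epsilon> c adv N) (\<lambda>h. real (RN h))"
proof -
  define a where "a = aa k \<epsilon> c"
  define M where "M = rrun k \<epsilon> c adv N"
  have a0: "a > 0" unfolding a_def using aa_pos k eps c by simp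
  have la: "ln (1 + a) > 0" using a0 by simp
  have eta0: "eta > 0" and eta1: "eta \<le> 1" and etal: "eta \<le> ln (1 + a)"
    unfolding eta_def a_def[symmetric] using la by (auto simp: field_simps)
  have intg: "integrable M f" for f :: "_ \<Rightarrow> real"
    unfolding M_def by (intro integrable_measure_pmf_finite rrun_finite)
  have E1: "measure_pmf.expectation M (\<lambda>h. Phi k \<epsilon> c (last (fst h))) \<le> ln (real k)"
  proof -
    have "measure_pmf.expectation M (\<lambda>h. Phi k \<epsilon> c (last (fst h))) \<le> Phi k \<epsilon> c rinit"
      unfolding M_def by (rule rrun_supermart[OF adv k eps c Phi_step]) (use k eps c in auto)
    also have "Phi k \<epsilon> c rinit = ln (real k)" by (simp add: Phi_def rinit_def ntot_def)
    finally show ?thesis .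
  qed
  have pw: "ln (real N) - ln (1 / eta) - 2 * ln (1 + a) * real (RN h) \<le> Phi k \<epsilon> c (last (fst h))"
    if h: "h \<in> set_pmf M" for h
  proof -
    define s where "s = last (fst h)"
    have inv: "rinv k \<epsilon> c s" and nt: "ntot k s = N"
      using rrun_support[OF adv k eps c h[unfolded M_def]] s_def by auto
    have p0: "prob s > 0" using inv unfolding rinv_def by auto
    have "real (k - bcnt s) / prob s \<ge> 0" using p0 by simp
    then have "ln (real N) \<le> ln (real (ntot k s) + real (k - bcnt s) / prob s)"
      using nt N by simp
    moreover have "ln (real (rounds s) + 1) \<le> eta * real (rounds s) + ln (1 / eta)"
      using ln_le_lin[OF eta0 eta1] by simp
    moreover have "eta * real (rounds s) \<le> ln (1 + a) * real (rounds s)"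
      using etal by (intro mult_right_mono) auto
    ultimately show ?thesis unfolding Phi_def RN_def s_def[symmetric] a_def[symmetric] by linarith
  qed
  have "measure_pmf.expectation M (\<lambda>h. ln (real N) - ln (1 / eta) - 2 * ln (1 + a) * real (RN h))
      \<le> measure_pmf.expectation M (\<lambda>h. Phi k \<epsilon> c (last (fst h)))"
    by (rule integral_mono_AE) (auto intro!: intg AE_pmfI pw)
  moreover have "measure_pmf.expectation M (\<lambda>h. ln (real N) - ln (1 / eta) - 2 * ln (1 + a) * real (RN h))
     = ln (real N) - ln (1 / eta) - 2 * ln (1 + a) * measure_pmf.expectation M (\<lambda>h. real (RN h))"
    by (simp add: intg)
  ultimately show ?thesis using E1 unfolding M_def a_def by linarith
qed

lemma pow_diff_bound:
  fixes w :: real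
  assumes "w \<ge> 0" "\<nu> \<ge> 1"
  shows "(1 + w) ^ \<nu> \<le> 1 + real \<nu> * w * (1 + w) ^ (\<nu> - 1)"
  using assms(2)
proof (induction \<nu> rule: dec_induct)
  case base
  then show ?case by simp
next
  case (step m)
  have "(1 + w) ^ Suc m = (1 + w) * (1 + w) ^ m" by simp
  also have "\<dots> \<le> (1 + w) * (1 + real m * w * (1 + w) ^ (m - 1))"
    using step assms by (intro mult_left_mono) auto
  also have "\<dots> = 1 + w + real m * w * ((1 + w) * (1 + w) ^ (m - 1))" by (simp add: algebra_simps)
  also have "(1 + w) * (1 + w) ^ (m - 1) = (1 + w) ^ m"
    using step(1) by (metis One_nat_def Suc_pred le_simps(3) power_Suc less_le_trans zero_less_one)
  also have "w \<le> w * (1 + w) ^ m" using assms by (simp add: mult_le_cancel_left1 one_le_power)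
  then have "1 + w + real m * w * (1 + w) ^ m \<le> 1 + real (Suc m) * w * (1 + w) ^ (Suc m - 1)"
    by (simp add: algebra_simps)
  finally show ?case .
qed

lemma ub_core:
  fixes p y j a :: real and \<nu> \<alpha> :: nat
  assumes p0: "0 < p" and p1: "p \<le> 1" and y: "y \<ge> 1" and j: "j \<ge> 1" and a: "a > 0"
    and hp: "p = 1 \<or> 1 / p \<le> a * y" and nu: "\<nu> \<ge> 1" and an: "(1 + a) ^ (\<nu> - 1) \<le> 9"
    and al: "real \<alpha> \<ge> 9 * real \<nu>"
  shows "p * ((y + j / p) / (y + 1 + (j - 1) / p)) ^ \<nu> + (1 - p) * ((y + j / p) / (y + 1 + j / p)) ^ \<nu>
     \<le> ((y + 1) / y) ^ \<alpha>"
proof -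
  define \<psi> where "\<psi> = y + j / p"
  define x1 where "x1 = y + 1 + (j - 1) / p"
  have jp: "(j - 1) / p \<ge> 0" "j / p \<ge> 0" using p0 j by auto
  have \<psi>0: "\<psi> > 0" unfolding \<psi>_def using jp y by linarith
  have x1y: "x1 \<ge> y + 1" unfolding x1_def using jp by linarith
  have x1p: "x1 = \<psi> + 1 - 1 / p" unfolding x1_def \<psi>_def using p0 by (simp add: field_simps)
  have t2: "((y + j / p) / (y + 1 + j / p)) ^ \<nu> \<le> 1"
  proof -
    have e: "y + 1 + j / p = \<psi> + 1" "y + j / p = \<psi>" by (simp_all add: \<psi>_def)
    show ?thesis unfolding e using \<psi>0 by (intro power_le_one) auto
  qed
  have bern: "1 + real \<alpha> * (1 / y) \<le> (1 + 1 / y) ^ \<alpha>"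
  proof (rule Bernoulli_inequality)
    have "1 / y \<ge> 0" using y by simp
    then show "- 1 \<le> 1 / y" by linarith
  qed
  have rhs: "((y + 1) / y) ^ \<alpha> = (1 + 1 / y) ^ \<alpha>" using y by (simp add: field_simps)
  have key: "p * (\<psi> / x1) ^ \<nu> \<le> p + 9 * real \<nu> / y"
  proof (cases "p = 1")
    case True
    then have "x1 = \<psi>" using x1p by simp
    then show ?thesis using True \<psi>0 y by simp
  next
    case False
    then have up: "1 / p \<le> a * y" using hp by simp
    define w where "w = \<psi> / x1 - 1"
    have x10: "x1 > 0" using x1y y by linarith
    have wdef: "w = (1 / p - 1) / x1" unfolding w_def using x10 x1p by (simp add: field_simps)
    have u1: "1 / p \<ge> 1" using p0 p1 by simp
    have w0: "w \<ge> 0" unfolding wdef using u1 x10 by simp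
    have "w \<le> (1 / p) / x1" unfolding wdef using x10 by (intro divide_right_mono) auto
    also have "\<dots> \<le> (1 / p) / y" using x1y y p0 by (intro divide_left_mono) auto
    also have "\<dots> \<le> a" using up y by (subst pos_divide_le_eq) auto
    finally have wa: "w \<le> a" .
    have pw: "p * w \<le> 1 / y"
    proof -
      have "p * w = (1 - p) / x1" unfolding wdef using p0 x10 by (simp add: field_simps)
      also have "\<dots> \<le> 1 / x1" using p0 x10 by (simp add: divide_right_mono)
      also have "\<dots> \<le> 1 / y" using x1y y by (intro divide_left_mono) auto
      finally show ?thesis .
    qed
    have "(1 + w) ^ (\<nu> - 1) \<le> (1 + a) ^ (\<nu> - 1)" using w0 wa by (intro power_mono) auto
    then have pw9: "(1 + w) ^ (\<nu> - 1) \<le> 9" using an by linarith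
    have "(\<psi> / x1) ^ \<nu> = (1 + w) ^ \<nu>" unfolding w_def by simp
    also have "\<dots> \<le> 1 + real \<nu> * w * (1 + w) ^ (\<nu> - 1)" by (rule pow_diff_bound[OF w0 nu])
    also have "\<dots> \<le> 1 + real \<nu> * w * 9" using pw9 w0 by (intro add_left_mono mult_left_mono) auto
    finally have "p * (\<psi> / x1) ^ \<nu> \<le> p * (1 + real \<nu> * w * 9)" using p0 by (intro mult_left_mono) auto
    also have "\<dots> = p + 9 * real \<nu> * (p * w)" by (simp add: algebra_simps)
    also have "\<dots> \<le> p + 9 * real \<nu> * (1 / y)" using pw by (intro add_left_mono mult_left_mono) auto
    finally show ?thesis by simp
  qed
  have "p * ((y + j / p) / (y + 1 + (j - 1) / p)) ^ \<nu> + (1 - p) * ((y + j / p) / (y + 1 + j / p)) ^ \<nu>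
     \<le> (p + 9 * real \<nu> / y) + (1 - p) * 1"
    using key t2 p1 unfolding \<psi>_def[symmetric] x1_def[symmetric] by (intro add_mono mult_left_mono) auto
  also have "\<dots> \<le> 1 + real \<alpha> * (1 / y)" using al y by (simp add: divide_right_mono)
  also have "\<dots> \<le> ((y + 1) / y) ^ \<alpha>" using bern rhs by simp
  finally show ?thesis .
qed

definition nu :: "nat \<Rightarrow> real \<Rightarrow> real \<Rightarrow> nat" where
  "nu k \<epsilon> c = max 1 (nat \<lceil>1 / ln (1 + aa k \<epsilon> c / 2)\<rceil>)"

definition theta :: "nat \<Rightarrow> real \<Rightarrow> real \<Rightarrow> real" where
  "theta k \<epsilon> c = real (nu k \<epsilon> c) * ln (1 + aa k \<epsilon> c / 2)"

definition U :: "nat \<Rightarrow> real \<Rightarrow> real \<Rightarrow> rstate \<Rightarrow> real" where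
  "U k \<epsilon> c s = exp (theta k \<epsilon> c * real (rounds s)) /
     ((real (ntot k s) + 1) ^ (9 * nu k \<epsilon> c) *
      (real (ntot k s) + 1 + real (k - bcnt s) / prob s) ^ nu k \<epsilon> c)"

lemma nu_facts:
  assumes a: "a > 0"
  defines "\<nu> \<equiv> max 1 (nat \<lceil>1 / ln (1 + a / 2)\<rceil>)"
  shows "\<nu> \<ge> 1" "(1 + a) ^ (\<nu> - 1) \<le> 9" "real \<nu> * ln (1 + a / 2) \<ge> 1"
    "exp (real \<nu> * ln (1 + a / 2)) = (1 + a / 2) ^ \<nu>"
proof -
  define L where "L = ln (1 + a / 2)"
  have L0: "L > 0" unfolding L_def using a by simp
  show "\<nu> \<ge> 1" unfolding \<nu>_def by simp
  have cc: "of_int \<lceil>1 / L\<rceil> - 1 < 1 / L \<and> 1 / L \<le> of_int \<lceil>1 / L\<rceil>" by (rule ceiling_correct)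
  have "1 / L > 0" using L0 by simp
  then have "(0::real) < of_int \<lceil>1 / L\<rceil>" using cc by linarith
  have "-1 < 1 / L" using \<open>1 / L > 0\<close> by linarith
  then have cpos: "\<lceil>1 / L\<rceil> \<ge> 0" by simp
  have rn: "real (nat \<lceil>1 / L\<rceil>) = of_int \<lceil>1 / L\<rceil>" by (rule of_nat_nat[OF cpos])
  have c1: "real (nat \<lceil>1 / L\<rceil>) \<ge> 1 / L" using cc rn by linarith
  have c2: "real (nat \<lceil>1 / L\<rceil>) < 1 / L + 1" using cc rn by linarith
  have nv: "real \<nu> \<ge> 1 / L" unfolding \<nu>_def L_def[symmetric] using c1 by simp
  then show "real \<nu> * ln (1 + a / 2) \<ge> 1" using L0 unfolding L_def[symmetric] by (simp add: field_simps)
  show "exp (real \<nu> * ln (1 + a / 2)) = (1 + a / 2) ^ \<nu>"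
    using a by (simp add: exp_of_nat_mult)
  show "(1 + a) ^ (\<nu> - 1) \<le> 9"
  proof (cases "\<nu> = 1")
    case True
    then show ?thesis by simp
  next
    case False
    then have "\<nu> = nat \<lceil>1 / L\<rceil>" unfolding \<nu>_def L_def by simp
    then have nv1: "real (\<nu> - 1) \<le> 1 / L" using c2 False \<open>\<nu> \<ge> 1\<close> by (simp add: of_nat_diff)
    have lnle: "ln (1 + a) \<le> 2 * L"
    proof -
      have "1 + a \<le> (1 + a / 2) ^ 2" by (simp add: power2_eq_square algebra_simps)
      then have "ln (1 + a) \<le> ln ((1 + a / 2) ^ 2)" using a by simp
      also have "\<dots> = 2 * L" unfolding L_def using a by (simp add: ln_realpow)
      finally show ?thesis .
    qed
    have "(1 + a) ^ (\<nu> - 1) = exp (real (\<nu> - 1) * ln (1 + a))"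
      using a by (simp add: exp_of_nat_mult)
    also have "\<dots> \<le> exp ((1 / L) * (2 * L))"
      using nv1 lnle a L0 by (intro exp_mono mult_mono) auto
    also have "\<dots> = exp 1 * exp 1" using L0 by (simp flip: exp_add)
    also have "\<dots> \<le> 3 * 3" using exp_le by (intro mult_mono) auto
    finally show ?thesis by simp
  qed
qed

lemma U_step:
  assumes inv: "rinv k \<epsilon> c s" and i: "i < k" and k: "k \<ge> 1" and eps: "\<epsilon> > 0" and c: "c \<ge> 1"
  shows "prob s * U k \<epsilon> c (rstep k \<epsilon> c s i True) + (1 - prob s) * U k \<epsilon> c (rstep k \<epsilon> c s i False)
     \<le> U k \<epsilon> c s"
proof -
  define y where "y = real (ntot k s) + 1"
  define p where "p = prob s"
  define j where "j = real (k - bcnt s)"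
  define R where "R = real (rounds s)"
  define a where "a = aa k \<epsilon> c"
  define \<nu> where "\<nu> = nu k \<epsilon> c"
  define \<theta> where "\<theta> = theta k \<epsilon> c"
  define E where "E = exp (\<theta> * R)"
  define \<alpha> where "\<alpha> = 9 * \<nu>"
  have B: "bcnt s < k" and p0: "0 < p" and p1: "p \<le> 1" and nR: "k * rounds s + bcnt s \<le> ntot k s"
    using inv unfolding rinv_def p_def by auto
  have j1: "j \<ge> 1" using B unfolding j_def by simp
  have y1: "y \<ge> 1" unfolding y_def by simp
  have a0: "a > 0" unfolding a_def using aa_pos k eps c by simp
  have E0: "E > 0" unfolding E_def by simp
  note nf = nu_facts[OF a0]
  have nu1: "\<nu> \<ge> 1" and an: "(1 + a) ^ (\<nu> - 1) \<le> 9" and eth: "exp \<theta> = (1 + a / 2) ^ \<nu>"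
    using nf unfolding \<nu>_def nu_def \<theta>_def theta_def a_def by auto
  have al: "real \<alpha> \<ge> 9 * real \<nu>" unfolding \<alpha>_def by simp
  have hp: "p = 1 \<or> 1 / p \<le> a * y"
  proof (cases "p = 1")
    case False
    then obtain nb :: nat where nb: "0 < nb" "nb \<le> ntot k s" "p = c * sqrt (real k) / (\<epsilon> * real nb)"
      using inv unfolding rinv_def p_def by auto
    then have "p = real k / (a * real nb)" using aa_p[OF k eps c, of "real nb"] a_def by simp
    then have "1 / p = a * real nb / real k" using a0 nb k by simp
    also have "\<dots> \<le> a * real nb / 1" using a0 k by (intro divide_left_mono) auto
    also have "\<dots> \<le> a * y" using nb a0 unfolding y_def by simp
    finally show ?thesis by simp
  qed simp
  have nt: "real (ntot k (rstep k \<epsilon> c s i b)) = y" for b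
    using ntot_step[OF i] y_def by simp
  have UF: "U k \<epsilon> c (rstep k \<epsilon> c s i False) = E / ((y + 1) ^ \<alpha> * (y + 1 + j / p) ^ \<nu>)"
    unfolding U_def using nt[of False] by (simp add: j_def p_def R_def E_def \<theta>_def \<alpha>_def \<nu>_def y_def)
  have UT: "U k \<epsilon> c (rstep k \<epsilon> c s i True) \<le> E / ((y + 1) ^ \<alpha> * (y + 1 + (j - 1) / p) ^ \<nu>)"
  proof (cases "bcnt s + 1 = k")
    case False
    note e = rstep_T_mid[OF False, of \<epsilon> c i]
    have "real (k - bcnt (rstep k \<epsilon> c s i True)) = j - 1"
      using e B False unfolding j_def by simp
    then show ?thesis
      unfolding U_def using nt[of True] e by (simp add: p_def R_def E_def \<theta>_def \<alpha>_def \<nu>_def y_def)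
  next
    case True
    note e = rstep_T_end[OF True i, of \<epsilon> c]
    have jj: "j = 1" using True unfolding j_def by simp
    define p' where "p' = min 1 (real k / (a * y))"
    have pe: "prob (rstep k \<epsilon> c s i True) = p'"
      unfolding e(3) p'_def a_def y_def using aa_p[OF k eps c, of "real (ntot k s) + 1"] by simp
    have ay: "a * y > 0" using a0 y1 by simp
    have p'0: "p' > 0" using ay k unfolding p'_def by simp
    have kp: "real k / p' \<ge> a * y"
    proof (cases "real k / (a * y) \<le> 1")
      case True
      then have "p' = real k / (a * y)" unfolding p'_def by simp
      then show ?thesis using ay k by simp
    next
      case False
      then have "p' = 1" unfolding p'_def by simp
      then show ?thesis using False ay by (simp add: field_simps)
    qed
    have "(a / 2) * (y + 1) \<le> a * y" using a0 y1 by (simp add: field_simps)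
    moreover have "(1 + a / 2) * (y + 1) = y + 1 + (a / 2) * (y + 1)" by (simp add: algebra_simps)
    ultimately have "(1 + a / 2) * (y + 1) \<le> y + 1 + real k / p'" using kp by linarith
    then have "((1 + a / 2) * (y + 1)) ^ \<nu> \<le> (y + 1 + real k / p') ^ \<nu>"
      using a0 y1 by (intro power_mono) auto
    then have pm: "exp \<theta> * (y + 1) ^ \<nu> \<le> (y + 1 + real k / p') ^ \<nu>"
      unfolding eth by (simp add: power_mult_distrib)
    have pos1: "(y + 1) ^ \<nu> > 0" "(y + 1) ^ \<alpha> > 0" using y1 by auto
    have "exp \<theta> * (y + 1) ^ \<nu> > 0" using pos1 by simp
    then have pos2: "(y + 1 + real k / p') ^ \<nu> > 0" using pm by linarith
    have "U k \<epsilon> c (rstep k \<epsilon> c s i True) = E * exp \<theta> / ((y + 1) ^ \<alpha> * (y + 1 + real k / p') ^ \<nu>)"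
      unfolding U_def using nt[of True] e pe
      by (simp add: R_def E_def \<theta>_def \<alpha>_def \<nu>_def y_def distrib_left exp_add)
    also have "\<dots> \<le> E * exp \<theta> / ((y + 1) ^ \<alpha> * (exp \<theta> * (y + 1) ^ \<nu>))"
      using pm pos1 pos2 E0 by (intro divide_left_mono mult_left_mono mult_pos_pos) auto
    also have "\<dots> = E / ((y + 1) ^ \<alpha> * (y + 1 + (j - 1) / p) ^ \<nu>)"
      using jj by simp
    finally show ?thesis .
  qed
  define \<psi> where "\<psi> = y + j / p"
  have jp: "(j - 1) / p \<ge> 0" "j / p \<ge> 0" using p0 j1 by auto
  have \<psi>0: "\<psi> > 0" unfolding \<psi>_def using jp y1 by linarith
  have x10: "y + 1 + (j - 1) / p > 0" "y + 1 + j / p > 0" using jp y1 by linarith+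
  have D0: "(y + 1) ^ \<alpha> * \<psi> ^ \<nu> > 0" using \<psi>0 y1 by simp
  have "p * U k \<epsilon> c (rstep k \<epsilon> c s i True) + (1 - p) * U k \<epsilon> c (rstep k \<epsilon> c s i False)
     \<le> p * (E / ((y + 1) ^ \<alpha> * (y + 1 + (j - 1) / p) ^ \<nu>)) + (1 - p) * (E / ((y + 1) ^ \<alpha> * (y + 1 + j / p) ^ \<nu>))"
    using UT UF p0 p1 unfolding p_def by (intro add_mono mult_left_mono) auto
  also have "\<dots> = E * (p * (\<psi> / (y + 1 + (j - 1) / p)) ^ \<nu> + (1 - p) * (\<psi> / (y + 1 + j / p)) ^ \<nu>)
      / ((y + 1) ^ \<alpha> * \<psi> ^ \<nu>)"
    using x10 \<psi>0 y1 by (simp add: power_divide field_simps)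
  also have "\<dots> \<le> E * ((y + 1) / y) ^ \<alpha> / ((y + 1) ^ \<alpha> * \<psi> ^ \<nu>)"
    using ub_core[OF p0 p1 y1 j1 a0 hp nu1 an al] E0 D0 unfolding \<psi>_def
    by (intro divide_right_mono mult_left_mono) auto
  also have "\<dots> = E / (y ^ \<alpha> * \<psi> ^ \<nu>)"
    using y1 \<psi>0 by (simp add: power_divide field_simps)
  also have "\<dots> = U k \<epsilon> c s"
    unfolding U_def \<psi>_def by (simp add: y_def j_def p_def R_def E_def \<theta>_def \<alpha>_def \<nu>_def)
  finally show ?thesis unfolding p_def .
qed

lemma exp_moment:
  assumes adv: "valid_adv k adv" and k: "k \<ge> 1" and eps: "\<epsilon> > 0" and c: "c \<ge> 1"
  shows "measure_pmf.expectation (rrun k \<epsilon> c adv N) (\<lambda>h. exp (theta k \<epsilon> c * real (RN h)))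
     \<le> (real N + 1) ^ (10 * nu k \<epsilon> c) * (1 + aa k \<epsilon> c) ^ nu k \<epsilon> c"
proof -
  define a where "a = aa k \<epsilon> c"
  define \<nu> where "\<nu> = nu k \<epsilon> c"
  define \<theta> where "\<theta> = theta k \<epsilon> c"
  define M where "M = rrun k \<epsilon> c adv N"
  define D where "D = (real N + 1) ^ (9 * \<nu>) * ((real N + 1) * (1 + real k + a)) ^ \<nu>"
  have a0: "a > 0" unfolding a_def using aa_pos k eps c by simp
  have D0: "D > 0" unfolding D_def using a0 by simp
  have intg: "integrable M f" for f :: "_ \<Rightarrow> real"
    unfolding M_def by (intro integrable_measure_pmf_finite rrun_finite)
  have E1: "measure_pmf.expectation M (\<lambda>h. U k \<epsilon> c (last (fst h))) \<le> 1 / (1 + real k) ^ \<nu>"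
  proof -
    have "measure_pmf.expectation M (\<lambda>h. U k \<epsilon> c (last (fst h))) \<le> U k \<epsilon> c rinit"
      unfolding M_def by (rule rrun_supermart[OF adv k eps c U_step]) (use k eps c in auto)
    also have "U k \<epsilon> c rinit = 1 / (1 + real k) ^ \<nu>"
      by (simp add: U_def rinit_def ntot_def \<nu>_def add.commute)
    finally show ?thesis .
  qed
  have pw: "exp (\<theta> * real (RN h)) \<le> D * U k \<epsilon> c (last (fst h))" if h: "h \<in> set_pmf M" for h
  proof -
    define s where "s = last (fst h)"
    have inv: "rinv k \<epsilon> c s" and nt: "ntot k s = N"
      using rrun_support[OF adv k eps c h[unfolded M_def]] s_def by auto
    have p0: "prob s > 0" and p1: "prob s \<le> 1" and B: "bcnt s < k" using inv unfolding rinv_def by auto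
    have jk: "real (k - bcnt s) \<le> real k" by simp
    have jp: "real (k - bcnt s) / prob s \<le> real k + a * real N"
    proof (cases "prob s = 1")
      case True
      have "a * real N \<ge> 0" using a0 by simp
      then show ?thesis using jk True by simp
    next
      case False
      then obtain nb :: nat where nb: "0 < nb" "nb \<le> N" "prob s = c * sqrt (real k) / (\<epsilon> * real nb)"
        using inv nt unfolding rinv_def by auto
      then have pe: "prob s = real k / (a * real nb)" using aa_p[OF k eps c, of "real nb"] a_def by simp
      have "real (k - bcnt s) / prob s \<le> real k / prob s" using jk p0 by (intro divide_right_mono) auto
      also have "\<dots> = a * real nb" using pe a0 nb k by simp
      also have "\<dots> \<le> a * real N" using nb a0 by simp
      finally show ?thesis by simp
    qed
    define \<psi> where "\<psi> = real N + 1 + real (k - bcnt s) / prob s"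
    have \<psi>0: "\<psi> > 0" unfolding \<psi>_def using p0 by (simp add: add_pos_nonneg)
    have "\<psi> \<le> (real N + 1) * (1 + real k + a)"
    proof -
      have "\<psi> \<le> real N + 1 + real k + a * real N" using jp unfolding \<psi>_def by simp
      also have "\<dots> \<le> (real N + 1) * (1 + real k + a)" using a0 by (simp add: algebra_simps)
      finally show ?thesis .
    qed
    then have "\<psi> ^ \<nu> \<le> ((real N + 1) * (1 + real k + a)) ^ \<nu>" using \<psi>0 by (intro power_mono) auto
    then have le: "(real N + 1) ^ (9 * \<nu>) * \<psi> ^ \<nu> \<le> D" unfolding D_def by (intro mult_left_mono) auto
    have U: "U k \<epsilon> c s = exp (\<theta> * real (RN h)) / ((real N + 1) ^ (9 * \<nu>) * \<psi> ^ \<nu>)"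
      unfolding U_def \<psi>_def RN_def s_def[symmetric] using nt by (simp add: \<theta>_def \<nu>_def)
    have pos: "(real N + 1) ^ (9 * \<nu>) * \<psi> ^ \<nu> > 0" using \<psi>0 by simp
    have "exp (\<theta> * real (RN h)) = ((real N + 1) ^ (9 * \<nu>) * \<psi> ^ \<nu>) * U k \<epsilon> c s"
      unfolding U using pos \<psi>0 by simp
    also have "\<dots> \<le> D * U k \<epsilon> c s"
      using le U pos by (intro mult_right_mono) auto
    finally show ?thesis unfolding s_def .
  qed
  have "measure_pmf.expectation M (\<lambda>h. exp (\<theta> * real (RN h)))
     \<le> measure_pmf.expectation M (\<lambda>h. D * U k \<epsilon> c (last (fst h)))"
    by (rule integral_mono_AE) (auto intro!: intg AE_pmfI pw)
  also have "\<dots> = D * measure_pmf.expectation M (\<lambda>h. U k \<epsilon> c (last (fst h)))" by simp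
  also have "\<dots> \<le> D * (1 / (1 + real k) ^ \<nu>)" using E1 D0 by (intro mult_left_mono) auto
  also have "\<dots> = (real N + 1) ^ (10 * \<nu>) * ((1 + real k + a) / (1 + real k)) ^ \<nu>"
  proof -
    have e1: "((real N + 1) * (1 + real k + a)) ^ \<nu> = (real N + 1) ^ \<nu> * (1 + real k + a) ^ \<nu>"
      by (rule power_mult_distrib)
    have e2: "(real N + 1) ^ (10 * \<nu>) = (real N + 1) ^ (9 * \<nu>) * (real N + 1) ^ \<nu>"
      by (simp add: power_add[symmetric])
    have e3: "((1 + real k + a) / (1 + real k)) ^ \<nu> = (1 + real k + a) ^ \<nu> / (1 + real k) ^ \<nu>"
      by (rule power_divide)
    show ?thesis unfolding D_def e1 e2 e3 by simp
  qed
  also have "\<dots> \<le> (real N + 1) ^ (10 * \<nu>) * (1 + a) ^ \<nu>"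
  proof -
    have "(1 + real k + a) / (1 + real k) \<le> 1 + a" using a0 by (simp add: field_simps)
    then show ?thesis using a0 by (intro mult_left_mono power_mono) auto
  qed
  finally show ?thesis unfolding M_def \<theta>_def \<nu>_def a_def .
qed

lemma mgf_to_mean:
  fixes P :: "'a pmf" and X :: "'a \<Rightarrow> real"
  assumes fin: "finite (set_pmf P)" and th: "\<theta> > 0" and Mv: "Mv > 0"
    and mg: "measure_pmf.expectation P (\<lambda>h. exp (\<theta> * X h)) \<le> Mv"
  shows "measure_pmf.expectation P X \<le> ln Mv / \<theta>"
proof -
  have intg: "integrable P f" for f :: "_ \<Rightarrow> real" using fin by (rule integrable_measure_pmf_finite)
  have pw: "Mv * (1 + \<theta> * X h - ln Mv) \<le> exp (\<theta> * X h)" for h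
  proof -
    have "1 + (\<theta> * X h - ln Mv) \<le> exp (\<theta> * X h - ln Mv)" by (rule exp_ge_add_one_self)
    then have "1 + \<theta> * X h - ln Mv \<le> exp (\<theta> * X h - ln Mv)" by linarith
    then have "Mv * (1 + \<theta> * X h - ln Mv) \<le> Mv * exp (\<theta> * X h - ln Mv)" using Mv by (intro mult_left_mono) auto
    also have "\<dots> = exp (\<theta> * X h)" using Mv by (simp add: exp_diff)
    finally show ?thesis .
  qed
  have "measure_pmf.expectation P (\<lambda>h. Mv * (1 + \<theta> * X h - ln Mv)) \<le> measure_pmf.expectation P (\<lambda>h. exp (\<theta> * X h))"
    by (rule integral_mono) (auto intro!: intg pw)
  moreover have "measure_pmf.expectation P (\<lambda>h. Mv * (1 + \<theta> * X h - ln Mv)) = Mv * (1 + \<theta> * measure_pmf.expectation P X - ln Mv)"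
    by (simp add: intg algebra_simps)
  ultimately have "Mv * (1 + \<theta> * measure_pmf.expectation P X - ln Mv) \<le> Mv * 1" using mg by linarith
  then have "1 + \<theta> * measure_pmf.expectation P X - ln Mv \<le> 1" using Mv by (simp only: mult_le_cancel_left_pos)
  then show ?thesis using th by (simp add: field_simps)
qed

lemma mgf_to_tail:
  fixes P :: "'a pmf" and X :: "'a \<Rightarrow> real"
  assumes fin: "finite (set_pmf P)" and th: "\<theta> > 0" and Mv: "Mv > 0"
    and mg: "measure_pmf.expectation P (\<lambda>h. exp (\<theta> * X h)) \<le> Mv"
    and d0: "0 < \<delta>" and d1: "\<delta> < 1"
  shows "measure_pmf.prob P {h. X h \<le> (ln Mv + ln (1 / \<delta>)) / \<theta>} \<ge> 1 - \<delta>"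
proof -
  define t where "t = (ln Mv + ln (1 / \<delta>)) / \<theta>"
  have intg: "integrable P f" for f :: "_ \<Rightarrow> real" using fin by (rule integrable_measure_pmf_finite)
  have "\<theta> * t = ln Mv + ln (1 / \<delta>)" using th unfolding t_def by simp
  then have et: "exp (\<theta> * t) = Mv / \<delta>" using Mv d0 by (simp add: exp_add)
  have cpos: "Mv / \<delta> > 0" using Mv d0 by simp
  have mk: "measure P {x\<in>space P. exp (\<theta> * X x) \<ge> Mv / \<delta>} \<le> measure_pmf.expectation P (\<lambda>h. exp (\<theta> * X h)) / (Mv / \<delta>)"
    by (rule integral_Markov_inequality_measure[where A = UNIV]) (auto intro!: intg cpos)
  also have "\<dots> \<le> Mv / (Mv / \<delta>)" using mg cpos by (intro divide_right_mono) auto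
  also have "\<dots> = \<delta>" using Mv d0 by simp
  finally have bad: "measure P {x. exp (\<theta> * X x) \<ge> Mv / \<delta>} \<le> \<delta>" by simp
  have "{x. exp (\<theta> * X x) \<ge> Mv / \<delta>} = UNIV - {h. X h < t}"
  proof -
    have "exp (\<theta> * X x) \<ge> Mv / \<delta> \<longleftrightarrow> \<not> X x < t" for x
    proof -
      have "exp (\<theta> * X x) \<ge> Mv / \<delta> \<longleftrightarrow> exp (\<theta> * X x) \<ge> exp (\<theta> * t)" using et by simp
      also have "\<dots> \<longleftrightarrow> \<theta> * X x \<ge> \<theta> * t" by simp
      also have "\<dots> \<longleftrightarrow> X x \<ge> t" using th by simp
      finally show ?thesis by auto
    qed
    then show ?thesis by auto
  qed
  then have "measure P {h. X h < t} = 1 - measure P {x. exp (\<theta> * X x) \<ge> Mv / \<delta>}"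
    using measure_pmf.prob_compl[of "{h. X h < t}" P] by simp
  then have "measure P {h. X h < t} \<ge> 1 - \<delta>" using bad by simp
  also have "measure P {h. X h < t} \<le> measure P {h. X h \<le> t}"
    by (intro measure_pmf.finite_measure_mono) auto
  finally show ?thesis unfolding t_def .
qed

lemma main_fixed:
  assumes k: "k \<ge> 1" and eps: "\<epsilon> > 0" and c: "c \<ge> 1"
  shows "\<exists>N0::nat. \<forall>N \<ge> N0. \<forall>adv. valid_adv k adv \<longrightarrow>
          1 / 4 * Lscale k \<epsilon> c N \<le> measure_pmf.expectation (rrun k \<epsilon> c adv N) (\<lambda>h. real (RN h)) \<and>
          measure_pmf.expectation (rrun k \<epsilon> c adv N) (\<lambda>h. real (RN h)) \<le> 41 * Lscale k \<epsilon> c N \<and>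
          (\<forall>\<delta>::real. 0 < \<delta> \<longrightarrow> \<delta> < 1 \<longrightarrow>
             measure_pmf.prob (rrun k \<epsilon> c adv N)
               {h. real (RN h) \<le> 41 * (Lscale k \<epsilon> c N + ln (1 / \<delta>))} \<ge> 1 - \<delta>)"
proof -
  define a where "a = aa k \<epsilon> c"
  define la where "la = ln (1 + a)"
  define l2 where "l2 = ln (1 + a / 2)"
  define eta where "eta = la / (1 + la)"
  define K where "K = ln (real k) + ln (1 / eta)"
  define N0 where "N0 = nat \<lceil>exp (2 * la + 2 * K)\<rceil> + 2"
  have a0: "a > 0" unfolding a_def using aa_pos k eps c by simp
  have la0: "la > 0" unfolding la_def using a0 by simp
  have l20: "l2 > 0" unfolding l2_def using a0 by simp
  have eta0: "eta > 0" and eta1: "eta \<le> 1" unfolding eta_def using la0 by auto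
  have K0: "K \<ge> 0" unfolding K_def using k eta0 eta1 by simp
  have lal2: "la \<le> 2 * l2"
  proof -
    have "1 + a \<le> (1 + a / 2) ^ 2" by (simp add: power2_eq_square algebra_simps)
    then have "ln (1 + a) \<le> ln ((1 + a / 2) ^ 2)" using a0 by simp
    also have "\<dots> = 2 * l2" unfolding l2_def using a0 by (simp add: ln_realpow)
    finally show ?thesis unfolding la_def .
  qed
  have Ls: "Lscale k \<epsilon> c N = ln (real N) / la" for N
    unfolding Lscale_def la_def a_def aa_def by simp
  show ?thesis
  proof (intro exI[of _ N0] allI impI)
    fix N adv assume N: "N \<ge> N0" and adv: "valid_adv k adv"
    have N2: "N \<ge> 2" using N unfolding N0_def by simp
    have "real N \<ge> exp (2 * la + 2 * K)"
    proof -
      have "exp (2 * la + 2 * K) \<le> of_int \<lceil>exp (2 * la + 2 * K)\<rceil>" by (rule le_of_int_ceiling)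
      also have "\<dots> \<le> real N" using N unfolding N0_def by linarith
      finally show ?thesis .
    qed
    then have "ln (exp (2 * la + 2 * K)) \<le> ln (real N)"
      using N2 by (subst ln_le_cancel_iff) auto
    then have lnN: "ln (real N) \<ge> 2 * la + 2 * K" by simp
    define E where "E = measure_pmf.expectation (rrun k \<epsilon> c adv N) (\<lambda>h. real (RN h))"
    have "ln (real N) - ln (real k) - ln (1 / eta) \<le> 2 * la * E"
      using exp_lower[OF adv k eps c] N2 unfolding E_def eta_def la_def a_def by simp
    then have "ln (real N) - K \<le> 2 * la * E" unfolding K_def by simp
    then have "ln (real N) / 2 \<le> 2 * la * E" using lnN la0 K0 by linarith
    then have low: "1 / 4 * Lscale k \<epsilon> c N \<le> E" unfolding Ls using la0 by (simp add: field_simps)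
    define \<nu> where "\<nu> = nu k \<epsilon> c"
    define \<theta> where "\<theta> = theta k \<epsilon> c"
    define Mv where "Mv = (real N + 1) ^ (10 * \<nu>) * (1 + a) ^ \<nu>"
    have th: "\<theta> = real \<nu> * l2" unfolding \<theta>_def theta_def \<nu>_def l2_def a_def by simp
    have nu1: "\<nu> \<ge> 1" and th1: "\<theta> \<ge> 1"
      using nu_facts[OF a0] unfolding th \<nu>_def nu_def l2_def a_def by auto
    have Mv0: "Mv > 0" unfolding Mv_def using a0 by simp
    have mg: "measure_pmf.expectation (rrun k \<epsilon> c adv N) (\<lambda>h. exp (\<theta> * real (RN h))) \<le> Mv"
      using exp_moment[OF adv k eps c, of N] unfolding Mv_def \<theta>_def \<nu>_def a_def by simp
    have lnMv: "ln Mv = real \<nu> * (10 * ln (real N + 1) + la)"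
      unfolding Mv_def la_def using a0 by (simp add: ln_mult ln_realpow algebra_simps)
    have lnN1: "ln (real N + 1) \<le> 2 * ln (real N)"
    proof -
      have rN: "real N \<ge> 2" using N2 by simp
      then have "2 * real N \<le> real N * real N" by (intro mult_right_mono) auto
      then have "real N + 1 \<le> real N ^ 2" using rN unfolding power2_eq_square by linarith
      then have "ln (real N + 1) \<le> ln (real N ^ 2)" using N2 by simp
      also have "\<dots> = 2 * ln (real N)" using N2 by (simp add: ln_realpow)
      finally show ?thesis .
    qed
    have key: "ln Mv / \<theta> \<le> 41 * Lscale k \<epsilon> c N"
    proof -
      have nupos: "real \<nu> > 0" using nu1 by simp
      have "ln Mv / \<theta> = (10 * ln (real N + 1) + la) / l2"
        unfolding lnMv th using nupos by simp
      also have "\<dots> \<le> (20 * ln (real N) + la) / l2"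
        using lnN1 l20 by (intro divide_right_mono) auto
      also have "\<dots> \<le> (20 * ln (real N) + la) / (la / 2)"
        using lal2 la0 lnN K0 by (intro divide_left_mono) auto
      also have "\<dots> = 40 * (ln (real N) / la) + 2" using la0 by (simp add: field_simps)
      also have "\<dots> \<le> 41 * (ln (real N) / la)"
      proof -
        have "2 * la \<le> ln (real N)" using lnN K0 by linarith
        then have "2 \<le> ln (real N) / la" using la0 by (simp add: field_simps)
        then show ?thesis by simp
      qed
      finally show ?thesis unfolding Ls .
    qed
    have th0: "\<theta> > 0" using th1 by simp
    have fin: "finite (set_pmf (rrun k \<epsilon> c adv N))" by (rule rrun_finite)
    have up: "E \<le> 41 * Lscale k \<epsilon> c N"
      using mgf_to_mean[OF fin th0 Mv0 mg] key unfolding E_def by simp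
    have tail: "measure_pmf.prob (rrun k \<epsilon> c adv N)
               {h. real (RN h) \<le> 41 * (Lscale k \<epsilon> c N + ln (1 / \<delta>))} \<ge> 1 - \<delta>"
      if d0: "0 < \<delta>" and d1: "\<delta> < 1" for \<delta> :: real
    proof -
      have ld: "ln (1 / \<delta>) \<ge> 0" using d0 d1 by simp
      have "ln (1 / \<delta>) / \<theta> \<le> ln (1 / \<delta>) / 1" using ld th1 by (intro divide_left_mono) auto
      then have tt: "(ln Mv + ln (1 / \<delta>)) / \<theta> \<le> 41 * (Lscale k \<epsilon> c N + ln (1 / \<delta>))"
        using key ld by (simp add: add_divide_distrib)
      have "1 - \<delta> \<le> measure_pmf.prob (rrun k \<epsilon> c adv N) {h. real (RN h) \<le> (ln Mv + ln (1 / \<delta>)) / \<theta>}"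
        by (rule mgf_to_tail[OF fin th0 Mv0 mg d0 d1])
      also have "\<dots> \<le> measure_pmf.prob (rrun k \<epsilon> c adv N) {h. real (RN h) \<le> 41 * (Lscale k \<epsilon> c N + ln (1 / \<delta>))}"
        using tt by (intro measure_pmf.finite_measure_mono) auto
      finally show ?thesis .
    qed
    show "1 / 4 * Lscale k \<epsilon> c N \<le> measure_pmf.expectation (rrun k \<epsilon> c adv N) (\<lambda>h. real (RN h)) \<and>
          measure_pmf.expectation (rrun k \<epsilon> c adv N) (\<lambda>h. real (RN h)) \<le> 41 * Lscale k \<epsilon> c N \<and>
          (\<forall>\<delta>::real. 0 < \<delta> \<longrightarrow> \<delta> < 1 \<longrightarrow>
             measure_pmf.prob (rrun k \<epsilon> c adv N)
               {h. real (RN h) \<le> 41 * (Lscale k \<epsilon> c N + ln (1 / \<delta>))} \<ge> 1 - \<delta>)"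
      using low up tail unfolding E_def by blast
  qed
qed

theorem mainTheorem7:
  "\<exists>C1 C2 C3 :: real. C1 > 0 \<and> C2 > 0 \<and> C3 > 0 \<and>
     (\<forall>(k::nat) (\<epsilon>::real) (c::real). k \<ge> 1 \<longrightarrow> \<epsilon> > 0 \<longrightarrow> c \<ge> 1 \<longrightarrow>
       (\<exists>N0::nat. \<forall>N \<ge> N0. \<forall>adv. valid_adv k adv \<longrightarrow>
          C1 * Lscale k \<epsilon> c N \<le> measure_pmf.expectation (rrun k \<epsilon> c adv N) (\<lambda>h. real (RN h)) \<and>
          measure_pmf.expectation (rrun k \<epsilon> c adv N) (\<lambda>h. real (RN h)) \<le> C2 * Lscale k \<epsilon> c N \<and>
          (\<forall>\<delta>::real. 0 < \<delta> \<longrightarrow> \<delta> < 1 \<longrightarrow>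
             measure_pmf.prob (rrun k \<epsilon> c adv N)
               {h. real (RN h) \<le> C3 * (Lscale k \<epsilon> c N + ln (1 / \<delta>))} \<ge> 1 - \<delta>)))"
  apply (rule exI[of _ "1 / 4"], rule exI[of _ 41], rule exI[of _ 41])
  using main_fixed by simp

end
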